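(* Let $G^\sigma$ be a connected oriented unicyclic graph of even order $n$ with cycle $C_k^\sigma$. Then $S(G^\sigma)$ is nonsingular if and only if either $G^\sigma\in\mathscr{U}_1$ and $G^\sigma$ has a perfect matching, or $G^\sigma\in\mathscr{U}_2$, $C_k^\sigma$ is oddly-oriented and $G^\sigma-C_k^\sigma$ has a perfect matching.
   Context: An oriented graph $G^\sigma$ is a simple graph with an orientation of each edge. Its skew-adjacency matrix $S(G^\sigma)=(s_{ij})$ has $s_{ij}=1$ if there is an arc from $v_i$ to $v_j$, $s_{ij}=-1$ if there is an arc from $v_j$ to $v_i$, and $0$ otherwise. For an even cycle $u_1\cdots u_ku_1$, its sign is the sign of $\prod_{i=1}^k s_{u_iu_{i+1}}$ ($u_{k+1}=u_1$); it is oddly-oriented if this sign is negative. A $\delta$-transformation deletes a pendant vertex (degree one) together with its unique neighbor and all incident edges. With $k$ the girth, $\mathscr{U}_1$ is the set of oriented unicyclic graphs of order $n$ with girth $k$ that can be transformed into a graph without edges by finitely many $\delta$-transformations; $\mathscr{U}_2$ is the set of those that can be transformed into $C_k^\sigma$ or the disjoint union of $C_k^\sigma$ with isolated vertices by finitely many $\delta$-transformations. $G^\sigma-C_k^\sigma$ is obtained by deleting the cycle's vertices and incident edges. *)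

theory Defs
  imports "HOL-Analysis.Analysis"
begin

text \<open>An oriented graph on the finite vertex type 'n (vertex set = UNIV) is given
by its arc set A: (u,v) \<in> A means an arc from u to v.\<close>

definition oriented_graph :: "('n \<times> 'n) set \<Rightarrow> bool" where
  "oriented_graph A \<longleftrightarrow> (\<forall>u. (u,u) \<notin> A) \<and> (\<forall>u v. (u,v) \<in> A \<longrightarrow> (v,u) \<notin> A)"

definition adj :: "('n \<times> 'n) set \<Rightarrow> 'n \<Rightarrow> 'n \<Rightarrow> bool" where
  "adj A u v \<longleftrightarrow> (u,v) \<in> A \<or> (v,u) \<in> A"

definition edges :: "('n \<times> 'n) set \<Rightarrow> 'n set set" where
  "edges A = {{u,v} | u v. (u,v) \<in> A}"

definition skew_entry :: "('n \<times> 'n) set \<Rightarrow> 'n \<Rightarrow> 'n \<Rightarrow> real" where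
  "skew_entry A u v = (if (u,v) \<in> A then 1 else if (v,u) \<in> A then -1 else 0)"

definition skew_adj :: "('n::finite \<times> 'n) set \<Rightarrow> real^'n^'n" where
  "skew_adj A = (\<chi> i j. skew_entry A i j)"

definition connected_graph :: "('n \<times> 'n) set \<Rightarrow> bool" where
  "connected_graph A \<longleftrightarrow> (\<forall>u v. (adj A)\<^sup>*\<^sup>* u v)"

definition unicyclic :: "('n::finite \<times> 'n) set \<Rightarrow> bool" where
  "unicyclic A \<longleftrightarrow> connected_graph A \<and> card (edges A) = CARD('n)"

definition is_cycle :: "('n \<times> 'n) set \<Rightarrow> 'n list \<Rightarrow> bool" where
  "is_cycle A c \<longleftrightarrow> distinct c \<and> length c \<ge> 3 \<and>
     (\<forall>i < length c. adj A (c ! i) (c ! ((i + 1) mod length c)))"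

definition oddly_oriented :: "('n \<times> 'n) set \<Rightarrow> 'n list \<Rightarrow> bool" where
  "oddly_oriented A c \<longleftrightarrow> even (length c) \<and>
     (\<Prod>i < length c. skew_entry A (c ! i) (c ! ((i + 1) mod length c))) < 0"

definition has_perfect_matching :: "('n \<times> 'n) set \<Rightarrow> 'n set \<Rightarrow> bool" where
  "has_perfect_matching A W \<longleftrightarrow> (\<exists>M. M \<subseteq> edges A \<and> (\<forall>e \<in> M. e \<subseteq> W) \<and>
      (\<forall>w \<in> W. \<exists>!e. e \<in> M \<and> w \<in> e))"

definition delta_step :: "('n \<times> 'n) set \<Rightarrow> 'n set \<Rightarrow> 'n set \<Rightarrow> bool" where
  "delta_step A W W' \<longleftrightarrow> (\<exists>u v. u \<in> W \<and> {w \<in> W. adj A u w} = {v} \<and> W' = W - {u, v})"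

definition in_U1 :: "('n \<times> 'n) set \<Rightarrow> bool" where
  "in_U1 A \<longleftrightarrow> (\<exists>W. (delta_step A)\<^sup>*\<^sup>* UNIV W \<and> (\<forall>u \<in> W. \<forall>w \<in> W. \<not> adj A u w))"

definition in_U2 :: "('n \<times> 'n) set \<Rightarrow> 'n list \<Rightarrow> bool" where
  "in_U2 A c \<longleftrightarrow> (\<exists>W. (delta_step A)\<^sup>*\<^sup>* UNIV W \<and> set c \<subseteq> W \<and>
      (\<forall>u \<in> W. \<forall>w \<in> W. adj A u w \<longrightarrow> u \<in> set c \<and> w \<in> set c))"

end

theory Submission
  imports Defs
begin

definition KT :: "('n \<times> 'n) set \<Rightarrow> 'n set \<Rightarrow> bool" where
  "KT A W \<longleftrightarrow> (\<forall>x::'n\<Rightarrow>real. (\<forall>i\<in>W. (\<Sum>j\<in>W. skew_entry A i j * x j) = 0) \<longrightarrow> (\<forall>j\<in>W. x j = 0))"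

lemma det_ker: "det (M::real^'n^'n) \<noteq> 0 \<longleftrightarrow> (\<forall>x. M *v x = 0 \<longrightarrow> x = 0)"
  by (metis invertible_det_nz invertible_left_inverse matrix_left_invertible_ker)

lemma det_KT: "det (skew_adj A) \<noteq> 0 \<longleftrightarrow> KT A (UNIV::'n::finite set)"
proof -
  have mv: "(skew_adj A *v v) $ i = (\<Sum>j\<in>UNIV. skew_entry A i j * v $ j)" for v :: "real^'n" and i
    by (simp add: skew_adj_def matrix_vector_mult_def)
  show ?thesis unfolding det_ker KT_def
  proof safe
    fix x :: "'n \<Rightarrow> real" and j
    assume H: "\<forall>v. skew_adj A *v v = 0 \<longrightarrow> v = 0" and R: "\<forall>i\<in>UNIV. (\<Sum>j\<in>UNIV. skew_entry A i j * x j) = 0"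
    have "skew_adj A *v (\<chi> j. x j) = 0" using R by (simp add: vec_eq_iff mv)
    then have "(\<chi> j. x j) = 0" using H by blast
    then show "x j = 0" by (simp add: vec_eq_iff)
  next
    fix v :: "real^'n"
    assume H: "\<forall>x::'n\<Rightarrow>real. (\<forall>i\<in>UNIV. (\<Sum>j\<in>UNIV. skew_entry A i j * x j) = 0) \<longrightarrow> (\<forall>j\<in>UNIV. x j = 0)"
      and "skew_adj A *v v = 0"
    then have "\<forall>i\<in>UNIV. (\<Sum>j\<in>UNIV. skew_entry A i j * v $ j) = 0" by (simp add: vec_eq_iff mv)
    then show "v = 0" using H[rule_format, of "\<lambda>j. v $ j"] by (simp add: vec_eq_iff)
  qed
qed

lemma se_skew: "oriented_graph A \<Longrightarrow> skew_entry A a b = - skew_entry A b a"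
  by (auto simp: oriented_graph_def skew_entry_def)
lemma se_zero: "\<not> adj A a b \<Longrightarrow> skew_entry A a b = 0"
  by (auto simp: adj_def skew_entry_def)
lemma se_adj: "adj A a b \<Longrightarrow> skew_entry A a b = 1 \<or> skew_entry A a b = -1"
  by (auto simp: adj_def skew_entry_def)
lemma se_self: "oriented_graph A \<Longrightarrow> skew_entry A a a = 0"
  by (auto simp: oriented_graph_def skew_entry_def)
lemma adj_sym: "adj A a b = adj A b a" by (auto simp: adj_def)
lemma adj_irr: "oriented_graph A \<Longrightarrow> adj A a b \<Longrightarrow> a \<noteq> b"
  by (auto simp: oriented_graph_def adj_def)

lemma sum_split2:
  assumes "finite W" "u \<in> W" "v \<in> W" "u \<noteq> v"
  shows "sum f W = f u + f v + sum f (W - {u,v})"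
proof -
  have "W = insert u (insert v (W - {u,v}))" using assms by auto
  then have "sum f W = sum f (insert u (insert v (W - {u,v})))" by simp
  also have "\<dots> = f u + f v + sum f (W - {u,v})" using assms by (simp add: add.assoc)
  finally show ?thesis .
qed

lemma KT_delta:
  fixes A :: "('n::finite \<times> 'n) set"
  assumes og: "oriented_graph A" and uW: "u \<in> W" and nb: "{w \<in> W. adj A u w} = {v}"
  shows "KT A W \<longleftrightarrow> KT A (W - {u,v})"
proof -
  let ?e = "skew_entry A" and ?W = "W - {u,v}"
  have vW: "v \<in> W" and auv: "adj A u v" using nb by auto
  have uv: "u \<noteq> v" using adj_irr[OF og auv] .
  have nadj: "\<And>w. w \<in> W \<Longrightarrow> w \<noteq> v \<Longrightarrow> \<not> adj A u w" using nb by auto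
  have eu0: "\<And>w. w \<in> W \<Longrightarrow> w \<noteq> v \<Longrightarrow> ?e u w = 0" by (rule se_zero, rule nadj)
  have e0u: "\<And>w. w \<in> W \<Longrightarrow> w \<noteq> v \<Longrightarrow> ?e w u = 0" using nadj adj_sym se_zero by metis
  have euv: "?e u v \<noteq> 0" using se_adj[OF auv] by auto
  have evu: "?e v u \<noteq> 0" using euv se_skew[OF og] by (metis neg_equal_0_iff_equal)
  have euu: "?e u u = 0" "?e v v = 0" using se_self[OF og] by auto
  have fin: "finite W" by simp
  have sp: "\<And>f. sum f W = f u + f v + sum f ?W" using sum_split2[OF fin uW vW uv] .
  show ?thesis
  proof
    assume K: "KT A W"
    show "KT A ?W" unfolding KT_def
    proof (intro allI impI)
      fix y :: "'n \<Rightarrow> real"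
      assume R: "\<forall>i\<in>?W. (\<Sum>j\<in>?W. ?e i j * y j) = 0"
      define a where "a = - (\<Sum>j\<in>?W. ?e v j * y j) / ?e v u"
      define x where "x = y(v := 0, u := a)"
      have xW: "\<And>j. j \<in> ?W \<Longrightarrow> x j = y j" by (auto simp: x_def)
      have sW: "\<And>i. (\<Sum>j\<in>?W. ?e i j * x j) = (\<Sum>j\<in>?W. ?e i j * y j)"
        by (rule sum.cong) (auto simp: xW)
      have xu: "x u = a" and xv: "x v = 0" using uv by (auto simp: x_def)
      have "\<forall>i\<in>W. (\<Sum>j\<in>W. ?e i j * x j) = 0"
      proof
        fix i assume iW: "i \<in> W"
        consider "i = u" | "i = v" | "i \<in> ?W" using iW by auto
        then show "(\<Sum>j\<in>W. ?e i j * x j) = 0"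
        proof cases
          case 1
          have "(\<Sum>j\<in>?W. ?e u j * x j) = 0" by (rule sum.neutral) (auto simp: eu0)
          then show ?thesis using 1 by (simp add: sp euu xv)
        next
          case 2
          then show ?thesis using evu by (simp add: sp euu xv xu sW a_def)
        next
          case 3
          then show ?thesis using R e0u[of i] by (simp add: sp xv sW)
        qed
      qed
      then have "\<forall>j\<in>W. x j = 0" using K by (simp add: KT_def)
      then show "\<forall>j\<in>?W. y j = 0" using xW by auto
    qed
  next
    assume K: "KT A ?W"
    show "KT A W" unfolding KT_def
    proof (intro allI impI)
      fix x :: "'n \<Rightarrow> real"
      assume R: "\<forall>i\<in>W. (\<Sum>j\<in>W. ?e i j * x j) = 0"
      have "(\<Sum>j\<in>?W. ?e u j * x j) = 0" by (rule sum.neutral) (auto simp: eu0)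
      moreover have "(\<Sum>j\<in>W. ?e u j * x j) = 0" using R uW by blast
      ultimately have "?e u v * x v = 0" by (simp add: sp euu)
      then have xv: "x v = 0" using euv by simp
      have "\<forall>i\<in>?W. (\<Sum>j\<in>?W. ?e i j * x j) = 0"
      proof
        fix i assume "i \<in> ?W"
        then show "(\<Sum>j\<in>?W. ?e i j * x j) = 0" using R[rule_format, of i] e0u[of i] by (simp add: sp xv)
      qed
      then have z: "\<forall>j\<in>?W. x j = 0" using K by (simp add: KT_def)
      have "(\<Sum>j\<in>?W. ?e v j * x j) = 0" by (rule sum.neutral) (auto simp: z)
      moreover have "(\<Sum>j\<in>W. ?e v j * x j) = 0" using R vW by blast
      ultimately have "?e v u * x u = 0" by (simp add: sp euu xv)
      then have "x u = 0" using evu by simp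
      then show "\<forall>j\<in>W. x j = 0" using z xv by auto
    qed
  qed
qed

lemma adj_edge: "adj A a b \<Longrightarrow> {a,b} \<in> edges A"
  unfolding adj_def edges_def by (auto simp: insert_commute)
lemma edge_adj: "e \<in> edges A \<Longrightarrow> \<exists>a b. e = {a,b} \<and> adj A a b"
  unfolding adj_def edges_def by auto

lemma delta_stepE:
  assumes "delta_step A W W'"
  obtains u v where "u \<in> W" "{w \<in> W. adj A u w} = {v}" "W' = W - {u,v}"
  using assms unfolding delta_step_def by blast

lemma chain_KT:
  assumes "(delta_step A)\<^sup>*\<^sup>* W0 W" "oriented_graph (A::('n::finite \<times> 'n) set)"
  shows "KT A W0 \<longleftrightarrow> KT A W"
  using assms(1)
proof induction
  case (step W1 W2)
  then show ?case by (metis delta_stepE KT_delta[OF assms(2)])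
qed simp

lemma chain_sub:
  assumes "(delta_step A)\<^sup>*\<^sup>* W0 W" shows "W \<subseteq> W0"
  using assms by induction (auto elim!: delta_stepE)

lemma chain_even:
  assumes "(delta_step A)\<^sup>*\<^sup>* W0 W" "oriented_graph (A::('n::finite \<times> 'n) set)" "even (card W0)"
  shows "even (card W)"
  using assms(1)
proof induction
  case (step W1 W2)
  obtain u v where u: "u \<in> W1" and nb: "{w \<in> W1. adj A u w} = {v}" and W2: "W2 = W1 - {u,v}"
    using step(2) by (rule delta_stepE)
  have v: "v \<in> W1" "adj A u v" using nb by auto
  have uv: "u \<noteq> v" using adj_irr[OF assms(2) v(2)] .
  have "card W2 = card W1 - card {u,v}" unfolding W2 by (rule card_Diff_subset) (use u v in auto)
  moreover have "card {u,v} = 2" using uv by simp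
  moreover have "card W1 \<ge> 2" using card_mono[of W1 "{u,v}"] u v uv by simp
  ultimately show ?case using step(3) by simp
qed (simp add: assms)

lemma PM_E:
  assumes "has_perfect_matching A W"
  obtains M where "M \<subseteq> edges A" "\<forall>e\<in>M. e \<subseteq> W" "\<forall>w\<in>W. \<exists>!e. e \<in> M \<and> w \<in> e"
  using assms unfolding has_perfect_matching_def by (elim exE conjE) (rule that)

lemma ex1_same: "\<exists>!x. P x \<Longrightarrow> P a \<Longrightarrow> P b \<Longrightarrow> a = b" by (metis)

lemma chain_PM:
  assumes "(delta_step A)\<^sup>*\<^sup>* W0 W"
  shows "has_perfect_matching A (W0 - W)"
  using assms
proof induction
  case base
  show ?case unfolding has_perfect_matching_def by (rule exI[of _ "{}"]) auto
next
  case (step W1 W2)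
  obtain u v where u: "u \<in> W1" and nb: "{w \<in> W1. adj A u w} = {v}" and W2: "W2 = W1 - {u,v}"
    using step(2) by (rule delta_stepE)
  have v: "v \<in> W1" "adj A u v" using nb by auto
  have sub: "W1 \<subseteq> W0" using chain_sub[OF step(1)] .
  have W21: "W2 \<subseteq> W1" "u \<notin> W2" "v \<notin> W2" using W2 by auto
  obtain M where M: "M \<subseteq> edges A" "\<forall>e\<in>M. e \<subseteq> W0 - W1" "\<forall>w\<in>W0 - W1. \<exists>!e. e \<in> M \<and> w \<in> e"
    using step(3) by (rule PM_E)
  show ?case unfolding has_perfect_matching_def
  proof (intro exI[of _ "insert {u,v} M"] conjI)
    show "insert {u, v} M \<subseteq> edges A" using M(1) adj_edge[OF v(2)] by auto
    have "{u,v} \<subseteq> W0 - W2" using u v sub W21 by blast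
    moreover have "\<forall>e\<in>M. e \<subseteq> W0 - W2" using M(2) W21(1) by blast
    ultimately show "\<forall>e\<in>insert {u, v} M. e \<subseteq> W0 - W2" by blast
    show "\<forall>w\<in>W0 - W2. \<exists>!e. e \<in> insert {u, v} M \<and> w \<in> e"
    proof
      fix w assume w: "w \<in> W0 - W2"
      show "\<exists>!e. e \<in> insert {u, v} M \<and> w \<in> e"
      proof (cases "w \<in> W1")
        case True
        then have wuv: "w = u \<or> w = v" using w W2 by blast
        show ?thesis
        proof (rule ex1I[of _ "{u,v}"])
          show "{u, v} \<in> insert {u, v} M \<and> w \<in> {u, v}" using wuv by blast
          fix e assume e: "e \<in> insert {u, v} M \<and> w \<in> e"
          show "e = {u,v}"
          proof (rule ccontr)
            assume "e \<noteq> {u,v}"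
            then have "e \<in> M" using e by blast
            then have "e \<subseteq> W0 - W1" using M(2) by blast
            then show False using e True by blast
          qed
        qed
      next
        case False
        then have w1: "w \<in> W0 - W1" using w by blast
        then have ex: "\<exists>!e. e \<in> M \<and> w \<in> e" by (rule bspec[OF M(3)])
        then obtain e where e: "e \<in> M" "w \<in> e" by blast
        show ?thesis
        proof (rule ex1I[of _ e])
          show "e \<in> insert {u, v} M \<and> w \<in> e" using e by blast
          fix e' assume e': "e' \<in> insert {u, v} M \<and> w \<in> e'"
          have "w \<noteq> u" "w \<noteq> v" using False u v by auto
          then have "e' \<noteq> {u,v}" using e' by blast
          then have "e' \<in> M" using e' by blast
          then show "e' = e" using ex1_same[OF ex] e e' by blast
        qed
      qed
    qed
  qed
qed

lemma chain_PM2: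
  assumes "(delta_step A)\<^sup>*\<^sup>* W0 W" "C \<subseteq> W" "has_perfect_matching A (W0 - C)"
  shows "has_perfect_matching A (W - C)"
  using assms
proof (induction arbitrary: rule: rtranclp_induct)
  case base
  then show ?case by simp
next
  case (step W1 W2)
  obtain u v where u: "u \<in> W1" and nb: "{w \<in> W1. adj A u w} = {v}" and W2: "W2 = W1 - {u,v}"
    using step(2) by (rule delta_stepE)
  have v: "v \<in> W1" "adj A u v" using nb by auto
  have C1: "C \<subseteq> W1" using step(4) W2 by auto
  have uC: "u \<notin> C" "v \<notin> C" using step(4) W2 by auto
  obtain M where M: "M \<subseteq> edges A" "\<forall>e\<in>M. e \<subseteq> W1 - C" "\<forall>w\<in>W1 - C. \<exists>!e. e \<in> M \<and> w \<in> e"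
    using step(3)[OF C1 step(5)] by (rule PM_E)
  have exu: "\<exists>!e. e \<in> M \<and> u \<in> e" by (rule bspec[OF M(3)]) (use u uC in blast)
  have exv: "\<exists>!e. e \<in> M \<and> v \<in> e" by (rule bspec[OF M(3)]) (use v uC in blast)
  obtain eu where eu: "eu \<in> M" "u \<in> eu" using ex1_implies_ex[OF exu] by blast
  obtain a b where ab: "eu = {a,b}" "adj A a b" using edge_adj M(1) eu(1) by blast
  have "eu = {u,v}"
  proof -
    obtain y where y: "eu = {u,y}" "adj A u y" using ab eu(2) adj_sym by (metis insert_commute insert_iff singletonD)
    have "y \<in> W1" using M(2) eu(1) y(1) by auto
    then have "y = v" using nb y(2) by auto
    then show ?thesis using y by simp
  qed
  then have uvM: "{u,v} \<in> M" using eu by simp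
  have uniq: "\<And>e. e \<in> M \<Longrightarrow> u \<in> e \<or> v \<in> e \<Longrightarrow> e = {u,v}"
  proof -
    fix e assume "e \<in> M" and d: "u \<in> e \<or> v \<in> e"
    from d show "e = {u,v}"
    proof
      assume "u \<in> e" then show ?thesis using ex1_same[OF exu] uvM \<open>e \<in> M\<close> by blast
    next
      assume "v \<in> e" then show ?thesis using ex1_same[OF exv] uvM \<open>e \<in> M\<close> by blast
    qed
  qed
  show ?case unfolding has_perfect_matching_def
  proof (intro exI[of _ "M - {{u,v}}"] conjI)
    show "M - {{u, v}} \<subseteq> edges A" using M(1) by auto
    show "\<forall>e\<in>M - {{u, v}}. e \<subseteq> W2 - C"
    proof
      fix e assume e: "e \<in> M - {{u, v}}"
      then have "u \<notin> e" "v \<notin> e" using uniq by auto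
      then show "e \<subseteq> W2 - C" using M(2) e W2 by auto
    qed
    show "\<forall>w\<in>W2 - C. \<exists>!e. e \<in> M - {{u, v}} \<and> w \<in> e"
    proof
      fix w assume w: "w \<in> W2 - C"
      then have w1: "w \<in> W1 - C" "w \<noteq> u" "w \<noteq> v" using W2 by auto
      then have exw: "\<exists>!e. e \<in> M \<and> w \<in> e" using bspec[OF M(3)] by blast
      then obtain e where e: "e \<in> M" "w \<in> e" using ex1_implies_ex[OF exw] by blast
      show "\<exists>!e. e \<in> M - {{u, v}} \<and> w \<in> e"
      proof (rule ex1I[of _ e])
        show "e \<in> M - {{u, v}} \<and> w \<in> e" using e w1 by auto
        fix e' assume "e' \<in> M - {{u, v}} \<and> w \<in> e'"
        then show "e' = e" using ex1_same[OF exw] e by blast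
      qed
    qed
  qed
qed

lemma PM_isolated:
  assumes "has_perfect_matching A W" "\<forall>u\<in>W. \<forall>w\<in>W. \<not> adj A u w"
  shows "W = {}"
proof (rule ccontr)
  assume "W \<noteq> {}"
  then obtain w where w: "w \<in> W" by blast
  obtain M where M: "M \<subseteq> edges A" "\<forall>e\<in>M. e \<subseteq> W" "\<forall>w\<in>W. \<exists>!e. e \<in> M \<and> w \<in> e"
    using assms(1) by (rule PM_E)
  have exw: "\<exists>!e. e \<in> M \<and> w \<in> e" using bspec[OF M(3)] w by blast
  obtain e where e: "e \<in> M" "w \<in> e" using ex1_implies_ex[OF exw] by blast
  obtain a b where ab: "e = {a,b}" "adj A a b" using edge_adj M(1) e(1) by blast
  have "a \<in> W" "b \<in> W" using M(2) e(1) ab(1) by auto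
  then show False using assms(2) ab(2) by blast
qed

lemma isolated_not_KT:
  assumes "oriented_graph A" "w \<in> W" "finite W" "\<forall>y\<in>W. \<not> adj A w y"
  shows "\<not> KT A W"
proof
  assume K: "KT A W"
  define x where "x = (\<lambda>j. if j = w then (1::real) else 0)"
  have "\<forall>i\<in>W. (\<Sum>j\<in>W. skew_entry A i j * x j) = 0"
  proof
    fix i assume i: "i \<in> W"
    have "(\<Sum>j\<in>W. skew_entry A i j * x j) = skew_entry A i w"
      using assms(2,3) by (simp add: x_def if_distrib cong: if_cong)
    also have "\<dots> = 0" using assms(4) i adj_sym se_zero by metis
    finally show "(\<Sum>j\<in>W. skew_entry A i j * x j) = 0" .
  qed
  then have "\<forall>j\<in>W. x j = 0" using K unfolding KT_def by blast
  then have "x w = 0" using assms(2) by blast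
  then show False unfolding x_def by simp
qed

lemma suc_mod: "i < k \<Longrightarrow> Suc i mod k = (if Suc i = k then 0 else Suc i)"
  by auto

lemma AR1: "i < k \<Longrightarrow> j < k \<Longrightarrow> Suc i mod k = Suc j mod k \<Longrightarrow> i = j"
  by (auto simp: suc_mod split: if_splits)

lemma AR2: "3 \<le> k \<Longrightarrow> i < k \<Longrightarrow> j < k \<Longrightarrow> i = Suc j mod k \<Longrightarrow> j = Suc i mod k \<Longrightarrow> False"
proof -
  assume a: "3 \<le> k" "i < k" "j < k" "i = Suc j mod k" "j = Suc i mod k"
  show False
  proof (cases "Suc i = k")
    case True
    then have "j = 0" using a(5) by simp
    then have "i = 1" using a(1,4) by simp
    then show False using True a(1) by simp
  next
    case False
    then have "j = Suc i" using a(2,5) suc_mod by simp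
    then show False using a(1,3,4) suc_mod[of j k] by (auto split: if_splits)
  qed
qed


locale uc =
  fixes A :: "('n::finite \<times> 'n) set" and c :: "'n list"
  assumes og: "oriented_graph A" and uni: "unicyclic A" and cyc: "is_cycle A c"
begin

abbreviation "k \<equiv> length c"

definition cedges :: "'n set set" where
  "cedges = (\<lambda>i. {c ! i, c ! (Suc i mod k)}) ` {..<k}"

definition d :: "'n \<Rightarrow> nat" where
  "d v = (LEAST m. \<exists>s\<in>set c. (adj A ^^ m) s v)"

lemma k3: "3 \<le> k" and dist: "distinct c"
  using cyc by (auto simp: is_cycle_def)

lemma k0: "0 < k" using k3 by linarith
lemma cne: "c \<noteq> []" using k0 by auto

lemma cadj: "i < k \<Longrightarrow> adj A (c ! i) (c ! (Suc i mod k))"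
  using cyc by (auto simp: is_cycle_def)

lemma conn: "(adj A)\<^sup>*\<^sup>* u v"
  using uni by (auto simp: unicyclic_def connected_graph_def)

lemma d_ex: "\<exists>m. \<exists>s\<in>set c. (adj A ^^ m) s v"
proof -
  have "c ! 0 \<in> set c" by (rule nth_mem) (use k0 in simp)
  moreover obtain m where "(adj A ^^ m) (c ! 0) v" using conn[of "c ! 0" v] unfolding rtranclp_power by blast
  ultimately show ?thesis by blast
qed

lemma d_att: "\<exists>s\<in>set c. (adj A ^^ d v) s v"
  unfolding d_def by (rule LeastI_ex[OF d_ex])

lemma d_le: "s \<in> set c \<Longrightarrow> (adj A ^^ m) s v \<Longrightarrow> d v \<le> m"
  unfolding d_def by (rule Least_le) blast

lemma d_pos: "v \<notin> set c \<Longrightarrow> d v > 0"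
proof (rule ccontr)
  assume v: "v \<notin> set c" and "\<not> 0 < d v"
  then have "d v = 0" by simp
  then obtain s where "s \<in> set c" "(adj A ^^ 0) s v" using d_att[of v] by auto
  then show False using v by simp
qed

lemma parent_ex: "v \<notin> set c \<Longrightarrow> \<exists>p. adj A v p \<and> d p + 1 = d v"
proof -
  assume v: "v \<notin> set c"
  obtain m where m: "d v = Suc m" using d_pos[OF v] gr0_implies_Suc by blast
  obtain s where s: "s \<in> set c" "(adj A ^^ Suc m) s v" using d_att[of v] m by auto
  obtain p where p: "(adj A ^^ m) s p" "adj A p v" using s(2) by (rule relpowp_Suc_E)
  have "d p \<le> m" using d_le[OF s(1) p(1)] .
  moreover obtain s' where s': "s' \<in> set c" "(adj A ^^ d p) s' p" using d_att[of p] by blast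
  have "(adj A ^^ Suc (d p)) s' v" using s'(2) p(2) by (rule relpowp_Suc_I)
  then have "d v \<le> Suc (d p)" using d_le[OF s'(1)] by blast
  ultimately have "d p + 1 = d v" using m by simp
  moreover have "adj A v p" using p(2) by (simp add: adj_sym)
  ultimately show ?thesis by blast
qed

definition par :: "'n \<Rightarrow> 'n" where
  "par v = (SOME p. adj A v p \<and> d p + 1 = d v)"

lemma par: "v \<notin> set c \<Longrightarrow> adj A v (par v) \<and> d (par v) + 1 = d v"
  unfolding par_def by (rule someI_ex, rule parent_ex)

definition Ein :: "'n set set" where
  "Ein = {e \<in> edges A. e \<subseteq> set c}"

lemma fin_edges: "finite (edges A)" by simp

lemma card_edges: "card (edges A) = CARD('n)"
  using uni by (simp add: unicyclic_def)

lemma cedges_sub: "cedges \<subseteq> Ein"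
proof
  fix e assume "e \<in> cedges"
  then obtain i where i: "i < k" "e = {c ! i, c ! (Suc i mod k)}" unfolding cedges_def by auto
  have "c ! i \<in> set c" "c ! (Suc i mod k) \<in> set c" using i k0 by auto
  moreover have "e \<in> edges A" using i adj_edge[OF cadj[OF i(1)]] by simp
  ultimately show "e \<in> Ein" unfolding Ein_def using i by auto
qed

lemma card_cedges: "card cedges = k"
proof -
  have "inj_on (\<lambda>i. {c ! i, c ! (Suc i mod k)}) {..<k}"
  proof
    fix i j assume i: "i \<in> {..<k}" and j: "j \<in> {..<k}"
      and e: "{c ! i, c ! (Suc i mod k)} = {c ! j, c ! (Suc j mod k)}"
    have ik: "i < k" "j < k" "Suc i mod k < k" "Suc j mod k < k" using i j k0 by auto
    have nq: "\<And>a b. a < k \<Longrightarrow> b < k \<Longrightarrow> c ! a = c ! b \<longleftrightarrow> a = b"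
      using dist nth_eq_iff_index_eq by blast
    from e have "(c ! i = c ! j \<and> c ! (Suc i mod k) = c ! (Suc j mod k)) \<or>
                 (c ! i = c ! (Suc j mod k) \<and> c ! (Suc i mod k) = c ! j)"
      by (auto simp: doubleton_eq_iff)
    then show "i = j"
    proof
      assume "c ! i = c ! j \<and> c ! (Suc i mod k) = c ! (Suc j mod k)"
      then show ?thesis using nq[OF ik(1) ik(2)] by simp
    next
      assume h: "c ! i = c ! (Suc j mod k) \<and> c ! (Suc i mod k) = c ! j"
      have "i = Suc j mod k" using h nq[OF ik(1) ik(4)] by simp
      moreover have "Suc i mod k = j" using h nq[OF ik(3) ik(2)] by simp
      ultimately have "False" using AR2[OF k3 ik(1,2)] by metis
      then show ?thesis by blast
    qed
  qed
  then show ?thesis unfolding cedges_def by (simp add: card_image)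
qed

definition f :: "'n \<Rightarrow> 'n set" where "f v = {v, par v}"

lemma f_inj: "inj_on f (- set c)"
proof
  fix v w assume v: "v \<in> - set c" and w: "w \<in> - set c" and e: "f v = f w"
  show "v = w"
  proof (rule ccontr)
    assume "v \<noteq> w"
    then have "v = par w" "w = par v" using e unfolding f_def by (auto simp: doubleton_eq_iff)
    then show False using par[of v] par[of w] v w by auto
  qed
qed

lemma f_img: "f ` (- set c) \<subseteq> edges A - Ein"
proof
  fix e assume "e \<in> f ` (- set c)"
  then obtain v where v: "v \<notin> set c" "e = {v, par v}" unfolding f_def by auto
  have "e \<in> edges A" using v adj_edge[of A v "par v"] par[OF v(1)] by simp
  then show "e \<in> edges A - Ein" unfolding Ein_def using v by auto
qed

lemma counts: "Ein = cedges \<and> f ` (- set c) = edges A - Ein"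
proof -
  have c1: "card (- set c) = CARD('n) - k"
  proof -
    have "card (- set c) = card (UNIV - set c)" by (simp add: Compl_eq_Diff_UNIV)
    also have "\<dots> = CARD('n) - card (set c)" by (rule card_Diff_subset) auto
    finally show ?thesis using distinct_card[OF dist] by simp
  qed
  have c2: "card (f ` (- set c)) = CARD('n) - k" using card_image[OF f_inj] c1 by simp
  have EinE: "Ein \<subseteq> edges A" unfolding Ein_def by auto
  have c3: "card (edges A - Ein) = CARD('n) - card Ein"
    using card_Diff_subset[OF finite_subset[OF EinE fin_edges] EinE] card_edges by simp
  have "card (f ` (- set c)) \<le> card (edges A - Ein)"
    by (rule card_mono) (use f_img in auto)
  then have le: "CARD('n) - k \<le> CARD('n) - card Ein" using c2 c3 by simp
  have ge: "k \<le> card Ein" using card_mono[OF finite_subset[OF EinE fin_edges] cedges_sub] card_cedges by simp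
  have "card Ein \<le> CARD('n)" using card_mono[OF fin_edges EinE] card_edges by simp
  moreover have "k \<le> CARD('n)" using distinct_card[OF dist] card_mono[of UNIV "set c"] by simp
  ultimately have eq: "card Ein = k" using le ge by linarith
  have "Ein = cedges"
    using card_subset_eq[OF finite_subset[OF EinE fin_edges] cedges_sub] eq card_cedges by simp
  moreover have "f ` (- set c) = edges A - Ein"
    by (rule card_subset_eq) (use f_img c2 c3 eq in auto)
  ultimately show ?thesis by blast
qed

lemma no_chord:
  assumes "i < k" "t < k" "adj A (c ! i) (c ! t)"
  shows "t = Suc i mod k \<or> i = Suc t mod k"
proof -
  have "{c ! i, c ! t} \<in> Ein" unfolding Ein_def using adj_edge[OF assms(3)] assms by auto
  then obtain l where l: "l < k" "{c ! i, c ! t} = {c ! l, c ! (Suc l mod k)}"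
    using counts unfolding cedges_def by auto
  have ik: "Suc l mod k < k" using k0 by simp
  have nq: "\<And>a b. a < k \<Longrightarrow> b < k \<Longrightarrow> c ! a = c ! b \<longleftrightarrow> a = b"
    using dist nth_eq_iff_index_eq by blast
  from l(2) have "(c ! i = c ! l \<and> c ! t = c ! (Suc l mod k)) \<or> (c ! i = c ! (Suc l mod k) \<and> c ! t = c ! l)"
    by (auto simp: doubleton_eq_iff)
  then show ?thesis
  proof
    assume "c ! i = c ! l \<and> c ! t = c ! (Suc l mod k)"
    then have "i = l" "t = Suc l mod k" using nq[OF assms(1) l(1)] nq[OF assms(2) ik] by simp_all
    then show ?thesis by simp
  next
    assume "c ! i = c ! (Suc l mod k) \<and> c ! t = c ! l"
    then have "i = Suc l mod k" "t = l" using nq[OF assms(1) ik] nq[OF assms(2) l(1)] by simp_all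
    then show ?thesis by simp
  qed
qed

end

lemma add_mod2: "(j::nat) < k \<Longrightarrow> t < k \<Longrightarrow> (j + t) mod k = (if j + t < k then j + t else j + t - k)"
proof (cases "j + t < k")
  case False
  assume "j < k" "t < k"
  have "k \<le> j + t" using False by simp
  then have "(j + t) mod k = (j + t - k) mod k" by (rule le_mod_geq)
  also have "\<dots> = j + t - k" using \<open>j < k\<close> \<open>t < k\<close> by simp
  finally show ?thesis using False by simp
qed simp

lemma prod_rot:
  fixes g :: "nat \<Rightarrow> real"
  assumes "j < k"
  shows "(\<Prod>t<k. g ((j + t) mod k)) = (\<Prod>t<k. g t)"
proof -
  let ?h = "\<lambda>t. (j + t) mod k"
  have inj: "inj_on ?h {..<k}"
  proof
    fix t t' assume "t \<in> {..<k}" "t' \<in> {..<k}" "?h t = ?h t'"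
    then show "t = t'" using add_mod2[of j k t] add_mod2[of j k t'] assms by (auto split: if_splits)
  qed
  have img: "?h ` {..<k} = {..<k}"
    by (rule endo_inj_surj) (use assms inj in auto)
  have "(\<Prod>t<k. g t) = prod g (?h ` {..<k})" using img by simp
  also have "\<dots> = (\<Prod>t<k. g ((j + t) mod k))" by (simp add: prod.reindex[OF inj])
  finally show ?thesis by simp
qed

context uc begin

lemma W_sub:
  assumes deg: "\<forall>w\<in>W. \<exists>a b. a \<in> W \<and> b \<in> W \<and> a \<noteq> b \<and> adj A w a \<and> adj A w b"
  shows "W \<subseteq> set c"
proof (rule ccontr)
  assume nsub: "\<not> W \<subseteq> set c"
  define D where "D = W - set c"
  have Dne: "D \<noteq> {}" using nsub D_def by auto
  have finD: "finite D" by simp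
  define M where "M = Max (d ` D)"
  have "M \<in> d ` D" unfolding M_def by (rule Max_in) (use finD Dne in auto)
  then obtain w where w: "w \<in> D" "d w = M" by auto
  have maxD: "\<And>y. y \<in> D \<Longrightarrow> d y \<le> M" unfolding M_def using finD by simp
  have wW: "w \<in> W" "w \<notin> set c" using w D_def by auto
  have nb: "\<And>y. y \<in> W \<Longrightarrow> adj A w y \<Longrightarrow> y = par w"
  proof -
    fix y assume y: "y \<in> W" "adj A w y"
    have "{w,y} \<in> edges A" by (rule adj_edge[OF y(2)])
    moreover have "{w,y} \<notin> Ein" using wW unfolding Ein_def by auto
    ultimately have "{w,y} \<in> f ` (- set c)" using counts by auto
    then obtain x where x: "x \<notin> set c" "{w,y} = {x, par x}" unfolding f_def by auto
    then have "(w = x \<and> y = par x) \<or> (w = par x \<and> y = x)" by (simp add: doubleton_eq_iff)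
    then show "y = par w"
    proof
      assume "w = x \<and> y = par x" then show ?thesis by simp
    next
      assume h: "w = par x \<and> y = x"
      then have "y \<in> D" using y x D_def by auto
      then have "d y \<le> M" by (rule maxD)
      moreover have "d w + 1 = d y" using par[OF x(1)] h by simp
      ultimately show ?thesis using w(2) by simp
    qed
  qed
  obtain a b where ab: "a \<in> W" "b \<in> W" "a \<noteq> b" "adj A w a" "adj A w b" using deg wW by blast
  have "a = par w" "b = par w" using nb ab by auto
  then show False using ab(3) by simp
qed

lemma W_eq:
  assumes ne: "W \<noteq> {}"
    and deg: "\<forall>w\<in>W. \<exists>a b. a \<in> W \<and> b \<in> W \<and> a \<noteq> b \<and> adj A w a \<and> adj A w b"
  shows "W = set c"
proof
  have sub: "W \<subseteq> set c" by (rule W_sub[OF deg])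
  then show "W \<subseteq> set c" .
  have step: "c ! (Suc i mod k) \<in> W" if i: "i < k" and ci: "c ! i \<in> W" for i
  proof (rule ccontr)
    assume nW: "c ! (Suc i mod k) \<notin> W"
    obtain a b where ab: "a \<in> W" "b \<in> W" "a \<noteq> b" "adj A (c ! i) a" "adj A (c ! i) b"
      using deg ci by blast
    have "a \<in> set c" "b \<in> set c" using ab(1,2) sub by auto
    then obtain ta tb where ta: "ta < k" "a = c ! ta" and tb: "tb < k" "b = c ! tb" by (metis in_set_conv_nth)
    have "ta = Suc i mod k \<or> i = Suc ta mod k" using no_chord[OF i ta(1)] ab(4) ta(2) by simp
    moreover have "ta \<noteq> Suc i mod k" using nW ab(1) ta(2) by auto
    ultimately have 1: "i = Suc ta mod k" by simp
    have "tb = Suc i mod k \<or> i = Suc tb mod k" using no_chord[OF i tb(1)] ab(5) tb(2) by simp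
    moreover have "tb \<noteq> Suc i mod k" using nW ab(2) tb(2) by auto
    ultimately have 2: "i = Suc tb mod k" by simp
    have "ta = tb" using AR1[OF ta(1) tb(1)] 1 2 by simp
    then show False using ab(3) ta(2) tb(2) by simp
  qed
  obtain w where w: "w \<in> W" using ne by auto
  then have "w \<in> set c" using sub by auto
  then obtain i0 where i0: "i0 < k" "w = c ! i0" by (metis in_set_conv_nth)
  then have i0: "i0 < k" "c ! i0 \<in> W" using w by auto
  have all: "c ! ((i0 + m) mod k) \<in> W" for m
  proof (induction m)
    case 0 then show ?case using i0 by simp
  next
    case (Suc m)
    have "(i0 + m) mod k < k" using k0 by simp
    from step[OF this Suc] show ?case by (simp add: mod_Suc_eq)
  qed
  show "set c \<subseteq> W"
  proof
    fix v assume "v \<in> set c"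
    then obtain j where j: "j < k" "v = c ! j" by (auto simp: in_set_conv_nth)
    have "(i0 + (j + k - i0)) mod k = j" using i0(1) j(1) by simp
    then show "v \<in> W" using all[of "j + k - i0"] j by simp
  qed
qed

end

context uc begin

definition s :: "nat \<Rightarrow> real" where "s i = skew_entry A (c ! i) (c ! (Suc i mod k))"

lemma s_pm: "i < k \<Longrightarrow> s i = 1 \<or> s i = -1"
  unfolding s_def by (rule se_adj[OF cadj])

lemma s_sq: "i < k \<Longrightarrow> s i * s i = 1"
  using s_pm[of i] by auto

lemma sum_set_c: "(\<Sum>v\<in>set c. g v) = (\<Sum>t<k. g (c ! t))"
proof -
  have "set c = nth c ` {..<k}" by (auto simp: in_set_conv_nth)
  then show ?thesis using sum.reindex[OF inj_on_nth[OF dist, of "{..<k}"], of g] by simp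
qed

lemma row:
  assumes j: "j < k"
  shows "(\<Sum>v\<in>set c. skew_entry A (c ! (Suc j mod k)) v * x v)
         = s (Suc j mod k) * x (c ! (Suc (Suc j mod k) mod k)) - s j * x (c ! j)"
proof -
  define i where "i = Suc j mod k"
  define i' where "i' = Suc i mod k"
  have ik: "i < k" "i' < k" using k0 by (simp_all add: i_def i'_def)
  have ne: "i' \<noteq> j"
  proof
    assume h: "i' = j"
    have a: "i = Suc j mod k" by (rule i_def)
    have b: "j = Suc i mod k" using h i'_def by simp
    show False by (rule AR2[OF k3 ik(1) j a b])
  qed
  let ?g = "\<lambda>t. skew_entry A (c ! i) (c ! t) * x (c ! t)"
  have z: "?g t = 0" if t: "t \<in> {..<k} - {i', j}" for t
  proof -
    have t1: "t < k" "t \<noteq> i'" "t \<noteq> j" using t by auto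
    have "\<not> adj A (c ! i) (c ! t)"
    proof
      assume "adj A (c ! i) (c ! t)"
      then have "t = i' \<or> i = Suc t mod k" using no_chord[OF ik(1) t1(1)] i'_def by simp
      then have "i = Suc t mod k" using t1 by simp
      then have "Suc t mod k = Suc j mod k" using i_def by simp
      then have "t = j" by (rule AR1[OF t1(1) j])
      then show False using t1 by simp
    qed
    then have "skew_entry A (c ! i) (c ! t) = 0" by (rule se_zero)
    then show ?thesis by simp
  qed
  have "(\<Sum>t<k. ?g t) = (\<Sum>t\<in>{i',j}. ?g t)"
    by (rule sum.mono_neutral_right) (use z ik j in auto)
  also have "\<dots> = ?g i' + ?g j" using ne by simp
  also have "?g i' = s i * x (c ! i')" by (simp add: s_def i'_def)
  also have "skew_entry A (c ! i) (c ! j) = - s j"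
    using se_skew[OF og, of "c ! i" "c ! j"] by (simp add: s_def i_def)
  finally have "(\<Sum>t<k. ?g t) = s i * x (c ! i') - s j * x (c ! j)" by simp
  then show ?thesis by (simp add: sum_set_c i_def i'_def)
qed

lemma P_pm: "(\<Prod>i<k. s i) = 1 \<or> (\<Prod>i<k. s i) = -1"
proof -
  have "\<bar>\<Prod>i<k. s i\<bar> = (\<Prod>i<k. \<bar>s i\<bar>)" by (rule abs_prod)
  also have "\<dots> = (\<Prod>i<k. 1)"
  proof (rule prod.cong)
    fix i assume "i \<in> {..<k}"
    then show "\<bar>s i\<bar> = 1" using s_pm[of i] by auto
  qed simp
  finally show ?thesis by auto
qed

lemma oddly_P: "oddly_oriented A c \<longleftrightarrow> even k \<and> (\<Prod>i<k. s i) < 0"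
  unfolding oddly_oriented_def s_def by simp

lemma K1:
  assumes odd: "oddly_oriented A c"
  shows "KT A (set c)"
  unfolding KT_def
proof (intro allI impI ballI)
  fix x v
  assume R: "\<forall>i\<in>set c. (\<Sum>j\<in>set c. skew_entry A i j * x j) = 0" and v: "v \<in> set c"
  define y where "y t = x (c ! t)" for t
  have KE: "s (Suc j mod k) * y (Suc (Suc j mod k) mod k) = s j * y j" if j: "j < k" for j
  proof -
    have "c ! (Suc j mod k) \<in> set c" using k0 by simp
    then have "(\<Sum>v\<in>set c. skew_entry A (c ! (Suc j mod k)) v * x v) = 0" using R by blast
    then show ?thesis using row[OF j, of x] by (simp add: y_def)
  qed
  have KE2: "y (Suc (Suc j mod k) mod k) = s (Suc j mod k) * s j * y j" if j: "j < k" for j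
  proof -
    have "Suc j mod k < k" using k0 by simp
    then have "s (Suc j mod k) * s (Suc j mod k) = 1" by (rule s_sq)
    then have "y (Suc (Suc j mod k) mod k) = s (Suc j mod k) * (s (Suc j mod k) * y (Suc (Suc j mod k) mod k))"
      by (simp add: mult.assoc[symmetric])
    also have "\<dots> = s (Suc j mod k) * s j * y j" using KE[OF j] by simp
    finally show ?thesis .
  qed
  have main: "y ((j + 2 * m) mod k) = (\<Prod>t<2 * m. s ((j + t) mod k)) * y j" if j: "j < k" for m j
  proof (induction m)
    case 0 then show ?case using j by simp
  next
    case (Suc m)
    define j' where "j' = (j + 2 * m) mod k"
    have j'k: "j' < k" using k0 by (simp add: j'_def)
    have e1: "Suc j' mod k = (j + Suc (2 * m)) mod k" unfolding j'_def by (simp add: mod_Suc_eq)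
    have e2: "Suc (Suc j' mod k) mod k = (j + 2 * Suc m) mod k" unfolding e1 by (simp add: mod_Suc_eq)
    have p: "(\<Prod>t<2 * Suc m. s ((j + t) mod k)) =
             (\<Prod>t<2 * m. s ((j + t) mod k)) * s ((j + 2 * m) mod k) * s ((j + Suc (2 * m)) mod k)"
      by simp
    have "y ((j + 2 * Suc m) mod k) = s (Suc j' mod k) * s j' * y j'" using KE2[OF j'k] e2 by simp
    also have "\<dots> = s ((j + Suc (2 * m)) mod k) * s ((j + 2 * m) mod k) * ((\<Prod>t<2 * m. s ((j + t) mod k)) * y j)"
      unfolding e1 using Suc by (simp add: j'_def)
    also have "\<dots> = (\<Prod>t<2 * Suc m. s ((j + t) mod k)) * y j"
      unfolding p by (simp only: mult_ac)
    finally show ?case .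
  qed
  obtain j where j: "j < k" "v = c ! j" using v by (metis in_set_conv_nth)
  have ev: "even k" and neg: "(\<Prod>i<k. s i) < 0" using odd oddly_P by auto
  have kk: "2 * (k div 2) = k" using ev by simp
  have "y ((j + k) mod k) = (\<Prod>t<k. s ((j + t) mod k)) * y j" using main[OF j(1), of "k div 2"] kk by simp
  also have "(\<Prod>t<k. s ((j + t) mod k)) = (\<Prod>t<k. s t)" by (rule prod_rot[OF j(1)])
  finally have "y j = (\<Prod>t<k. s t) * y j" using j(1) by simp
  then have "(1 - (\<Prod>t<k. s t)) * y j = 0" by (simp add: algebra_simps)
  moreover have "1 - (\<Prod>t<k. s t) \<noteq> 0" using neg by simp
  ultimately have "y j = 0" by simp
  then show "x v = 0" using j by (simp add: y_def)
qed

lemma K2: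
  assumes ev: "even k" and nodd: "\<not> oddly_oriented A c"
  shows "\<not> KT A (set c)"
proof
  assume K: "KT A (set c)"
  have P1: "(\<Prod>i<k. s i) = 1" using P_pm nodd ev oddly_P by auto
  define Pf where "Pf t = (\<Prod>u<t. s u)" for t
  define y where "y t = (if even t then Pf t else 0)" for t
  define x where "x v = (\<Sum>t<k. if c ! t = v then y t else 0)" for v
  have xc: "x (c ! j) = y j" if j: "j < k" for j
  proof -
    have "x (c ! j) = (\<Sum>t<k. if t = j then y t else 0)"
      unfolding x_def
    proof (rule sum.cong)
      fix t assume "t \<in> {..<k}"
      then have "c ! t = c ! j \<longleftrightarrow> t = j" using nth_eq_iff_index_eq[OF dist] j by auto
      then show "(if c ! t = c ! j then y t else 0) = (if t = j then y t else 0)" by simp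
    qed simp
    also have "\<dots> = y j" using j by simp
    finally show ?thesis .
  qed
  have KEy: "s (Suc j mod k) * y (Suc (Suc j mod k) mod k) = s j * y j" if j: "j < k" for j
  proof -
    consider "Suc (Suc j) < k" | "Suc (Suc j) = k" | "Suc j = k" using j by linarith
    then show ?thesis
    proof cases
      case 1
      then have m1: "Suc j mod k = Suc j" and m2: "Suc (Suc j) mod k = Suc (Suc j)" by simp_all
      show ?thesis
      proof (cases "even j")
        case True
        have "y (Suc (Suc j)) = Pf j * s j * s (Suc j)" using True by (simp add: y_def Pf_def)
        then have "s (Suc j) * y (Suc (Suc j)) = Pf j * s j * (s (Suc j) * s (Suc j))" by (simp add: mult_ac)
        also have "\<dots> = Pf j * s j" using s_sq[of "Suc j"] 1 by simp
        finally show ?thesis using True by (simp add: m1 m2 y_def mult_ac)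
      next
        case False
        then show ?thesis by (simp add: m1 m2 y_def)
      qed
    next
      case 2
      then have m1: "Suc j mod k = Suc j" and m2: "Suc (Suc j) mod k = 0" by simp_all
      have evj: "even j" using ev 2 by (metis even_Suc)
      have "Pf k = Pf j * s j * s (Suc j)" unfolding Pf_def using 2[symmetric] by simp
      then have "Pf j * s j * s (Suc j) = 1" using P1 Pf_def by simp
      then have "Pf j * s j * (s (Suc j) * s (Suc j)) = s (Suc j)" by (metis mult.assoc mult_1)
      then have "Pf j * s j = s (Suc j)" using s_sq[of "Suc j"] 2 by simp
      then show ?thesis using evj by (simp add: m1 m2 y_def Pf_def mult_ac)
    next
      case 3
      then have m1: "Suc j mod k = 0" by simp
      have m2: "Suc 0 mod k = 1" using k3 by simp
      have oj: "odd j" using ev 3 by (metis even_Suc)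
      show ?thesis using oj k3 by (simp add: m1 m2 y_def)
    qed
  qed
  have "\<forall>v\<in>set c. (\<Sum>w\<in>set c. skew_entry A v w * x w) = 0"
  proof
    fix v assume "v \<in> set c"
    then obtain i where i: "i < k" "v = c ! i" by (metis in_set_conv_nth)
    obtain j where j: "j < k" "Suc j mod k = i"
    proof (cases "i = 0")
      case True
      show ?thesis by (rule that[of "k - 1"]) (use True k0 in auto)
    next
      case False
      show ?thesis by (rule that[of "i - 1"]) (use False i in auto)
    qed
    have ik: "Suc (Suc j mod k) mod k < k" "Suc j mod k < k" using k0 by simp_all
    have "(\<Sum>w\<in>set c. skew_entry A v w * x w)
          = s (Suc j mod k) * x (c ! (Suc (Suc j mod k) mod k)) - s j * x (c ! j)"
      using row[OF j(1), of x] i j by simp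
    also have "\<dots> = s (Suc j mod k) * y (Suc (Suc j mod k) mod k) - s j * y j"
      using xc[OF ik(1)] xc[OF j(1)] by simp
    also have "\<dots> = 0" using KEy[OF j(1)] by simp
    finally show "(\<Sum>w\<in>set c. skew_entry A v w * x w) = 0" .
  qed
  then have "\<forall>w\<in>set c. x w = 0" using K unfolding KT_def by blast
  moreover have "c ! 0 \<in> set c" using k0 by simp
  ultimately have "x (c ! 0) = 0" by blast
  moreover have "x (c ! 0) = 1" using xc[of 0] k0 by (simp add: y_def Pf_def)
  ultimately show False by simp
qed

end

theorem theorem5p2:
  fixes A :: "('n::finite \<times> 'n) set" and c :: "'n list"
  assumes "oriented_graph A"
    and "unicyclic A"
    and "even CARD('n)"
    and "is_cycle A c"
  shows "det (skew_adj A) \<noteq> 0 \<longleftrightarrow>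
    ((in_U1 A \<and> has_perfect_matching A UNIV) \<or>
     (in_U2 A c \<and> oddly_oriented A c \<and> has_perfect_matching A (UNIV - set c)))"
proof -
  interpret uc A c using assms by unfold_locales
  have og: "oriented_graph A" by (rule assms(1))
  show ?thesis unfolding det_KT
  proof
    assume KU: "KT A UNIV"
    obtain W where W: "(delta_step A)\<^sup>*\<^sup>* UNIV W"
      and minW: "\<forall>W'. (delta_step A)\<^sup>*\<^sup>* UNIV W' \<longrightarrow> card W \<le> card W'"
      using ex_has_least_nat[of "\<lambda>W. (delta_step A)\<^sup>*\<^sup>* UNIV W" UNIV card] by auto
    have KW: "KT A W" using chain_KT[OF W og] KU by simp
    have nopend: "{w \<in> W. adj A u w} \<noteq> {v}" if u: "u \<in> W" for u v
    proof
      assume nb: "{w \<in> W. adj A u w} = {v}"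
      have "delta_step A W (W - {u,v})" unfolding delta_step_def using u nb by blast
      then have "(delta_step A)\<^sup>*\<^sup>* UNIV (W - {u,v})" using W by (rule rtranclp.rtrancl_into_rtrancl[rotated])
      then have "card W \<le> card (W - {u,v})" using minW by blast
      moreover have "card (W - {u,v}) < card W" by (rule psubset_card_mono) (use u in auto)
      ultimately show False by simp
    qed
    have noiso: "\<exists>y\<in>W. adj A u y" if u: "u \<in> W" for u
    proof (rule ccontr)
      assume "\<not> (\<exists>y\<in>W. adj A u y)"
      then have "\<not> KT A W" using isolated_not_KT[OF og u] by auto
      then show False using KW by simp
    qed
    have deg: "\<forall>w\<in>W. \<exists>a b. a \<in> W \<and> b \<in> W \<and> a \<noteq> b \<and> adj A w a \<and> adj A w b"
    proof
      fix w assume w: "w \<in> W"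
      obtain a where a: "a \<in> W" "adj A w a" using noiso[OF w] by blast
      have "{x \<in> W. adj A w x} \<noteq> {a}" by (rule nopend[OF w])
      moreover have "a \<in> {x \<in> W. adj A w x}" using a by simp
      ultimately obtain b where "b \<in> {x \<in> W. adj A w x}" "b \<noteq> a" by blast
      then show "\<exists>a b. a \<in> W \<and> b \<in> W \<and> a \<noteq> b \<and> adj A w a \<and> adj A w b" using a by blast
    qed
    have PMW: "has_perfect_matching A (UNIV - W)" by (rule chain_PM[OF W])
    show "(in_U1 A \<and> has_perfect_matching A UNIV) \<or>
     (in_U2 A c \<and> oddly_oriented A c \<and> has_perfect_matching A (UNIV - set c))"
    proof (cases "W = {}")
      case True
      have "in_U1 A" unfolding in_U1_def using W True by blast
      moreover have "has_perfect_matching A UNIV" using PMW True by simp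
      ultimately show ?thesis by blast
    next
      case False
      have Wc: "W = set c" by (rule W_eq[OF False deg])
      have "even (card W)" by (rule chain_even[OF W og]) (use assms(3) in simp)
      then have evk: "even k" using Wc distinct_card[OF dist] by simp
      have "KT A (set c)" using KW Wc by simp
      then have odd: "oddly_oriented A c" using K2[OF evk] by blast
      have "in_U2 A c" unfolding in_U2_def using W Wc by blast
      then show ?thesis using odd PMW Wc by blast
    qed
  next
    assume "(in_U1 A \<and> has_perfect_matching A UNIV) \<or>
     (in_U2 A c \<and> oddly_oriented A c \<and> has_perfect_matching A (UNIV - set c))"
    then show "KT A UNIV"
    proof
      assume h: "in_U1 A \<and> has_perfect_matching A UNIV"
      then obtain W where W: "(delta_step A)\<^sup>*\<^sup>* UNIV W" and iso: "\<forall>u \<in> W. \<forall>w \<in> W. \<not> adj A u w"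
        unfolding in_U1_def by blast
      have "has_perfect_matching A (W - {})"
        by (rule chain_PM2[OF W]) (use h in auto)
      then have "W = {}" using PM_isolated iso by simp
      moreover have "KT A {}" unfolding KT_def by simp
      ultimately show "KT A UNIV" using chain_KT[OF W og] by simp
    next
      assume h: "in_U2 A c \<and> oddly_oriented A c \<and> has_perfect_matching A (UNIV - set c)"
      then obtain W where W: "(delta_step A)\<^sup>*\<^sup>* UNIV W" and cW: "set c \<subseteq> W"
        and iso: "\<forall>u \<in> W. \<forall>w \<in> W. adj A u w \<longrightarrow> u \<in> set c \<and> w \<in> set c"
        unfolding in_U2_def by blast
      have "has_perfect_matching A (W - set c)"
        by (rule chain_PM2[OF W cW]) (use h in auto)
      moreover have "\<forall>u \<in> W - set c. \<forall>w \<in> W - set c. \<not> adj A u w" using iso by blast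
      ultimately have "W - set c = {}" by (rule PM_isolated)
      then have "W = set c" using cW by blast
      moreover have "KT A (set c)" using K1 h by blast
      ultimately show "KT A UNIV" using chain_KT[OF W og] by simp
    qed
  qed
qed

end
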